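(* Let $G=(V,E)$ be an undirected graph (finite or infinite) and $M=M(S)$ a multiplex of $G$ generated by the simplex $S=(V_S,E_S)$. Then $M$ is maximal if and only if the set $\widetilde M$ of vertices spanned by $M$ is a ``strong'' partitive set of $G$.
   Context: A graph $G=(V,E)$ has vertex set $V$ and edge set $E\subseteq V^2$; it is undirected if $E$ is irreflexive and symmetric; $ab$ denotes $\{(a,b),(b,a)\}$. For a set $A$ of ordered pairs, $\widetilde A$ is the set of vertices $a$ with $(a,b)\in A$ or $(b,a)\in A$ for some $b$. A set $X\subseteq V$ is a partitive set of $G$ if for all $a,b\in X$ and $c\in V\setminus X$: $(a,c)\in E\Leftrightarrow(b,c)\in E$ and $(c,a)\in E\Leftrightarrow(c,b)\in E$; $I(G)$ is the class of partitive sets. A ``strong'' partitive set is an $X\in I(G)$ such that for every $Y\in I(G)$ with $X\cap Y\neq\emptyset$, $X\subseteq Y$ or $Y\subseteq X$. Implication classes: on $E$ define $(a,b)\Gamma(a',b')$ iff either $a=a'$ and $(b,b')\notin E$, or $b=b'$ and $(a,a')\notin E$; the classes of the transitive closure $\Gamma^*$ are the implication classes. For an implication class $A$, $A^{-1}=\{(b,a):(a,b)\in A\}$ and the color class is $\widehat A=A\cup A^{-1}$. A simplex of rank $r\ge1$ is a complete sub-graph $S=(V_S,E_S)$ of $G$ on $r+1$ vertices whose distinct undirected edges lie in distinct color classes; it is maximal if not properly contained in a larger simplex. The multiplex generated by $S$ is $M(S)=\bigcup\{\widehat A:\widehat A\text{ a color class},\ \widehat A\cap E_S\neq\emptyset\}$;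 the multiplex is maximal if $S$ is maximal. *)

theory Defs
  imports Main
begin

definition undirected_graph :: "'a set \<Rightarrow> ('a \<times> 'a) set \<Rightarrow> bool" where
  "undirected_graph V E \<longleftrightarrow> E \<subseteq> V \<times> V \<and> irrefl E \<and> sym E"

definition partitive :: "'a set \<Rightarrow> ('a \<times> 'a) set \<Rightarrow> 'a set \<Rightarrow> bool" where
  "partitive V E X \<longleftrightarrow> X \<subseteq> V \<and>
     (\<forall>a\<in>X. \<forall>b\<in>X. \<forall>c\<in>V - X.
        ((a, c) \<in> E \<longleftrightarrow> (b, c) \<in> E) \<and> ((c, a) \<in> E \<longleftrightarrow> (c, b) \<in> E))"

definition strong_partitive :: "'a set \<Rightarrow> ('a \<times> 'a) set \<Rightarrow> 'a set \<Rightarrow> bool" where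
  "strong_partitive V E X \<longleftrightarrow> partitive V E X \<and>
     (\<forall>Y. partitive V E Y \<longrightarrow> X \<inter> Y \<noteq> {} \<longrightarrow> X \<subseteq> Y \<or> Y \<subseteq> X)"

definition Gamma :: "('a \<times> 'a) set \<Rightarrow> (('a \<times> 'a) \<times> ('a \<times> 'a)) set" where
  "Gamma E = {((a, b), (a', b')). (a, b) \<in> E \<and> (a', b') \<in> E \<and>
      ((a = a' \<and> (b, b') \<notin> E) \<or> (b = b' \<and> (a, a') \<notin> E))}"

definition implication_class :: "('a \<times> 'a) set \<Rightarrow> ('a \<times> 'a) \<Rightarrow> ('a \<times> 'a) set" where
  "implication_class E e = {f \<in> E. (e, f) \<in> (Gamma E)\<^sup>*}"

definition implication_classes :: "('a \<times> 'a) set \<Rightarrow> ('a \<times> 'a) set set" where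
  "implication_classes E = implication_class E ` E"

definition color_classes :: "('a \<times> 'a) set \<Rightarrow> ('a \<times> 'a) set set" where
  "color_classes E = (\<lambda>A. A \<union> A\<inverse>) ` implication_classes E"

definition complete_edges :: "'a set \<Rightarrow> ('a \<times> 'a) set" where
  "complete_edges Vs = {(a, b). a \<in> Vs \<and> b \<in> Vs \<and> a \<noteq> b}"

text \<open>A simplex (of rank r = card Vs - 1 \<ge> 1), given by its vertex set: a complete
  subgraph on finitely many (at least 2) vertices whose distinct undirected edges
  lie in distinct color classes.\<close>
definition simplex :: "'a set \<Rightarrow> ('a \<times> 'a) set \<Rightarrow> 'a set \<Rightarrow> bool" where
  "simplex V E Vs \<longleftrightarrow> finite Vs \<and> card Vs \<ge> 2 \<and> Vs \<subseteq> V \<and>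
     complete_edges Vs \<subseteq> E \<and>
     (\<forall>a b c d. (a, b) \<in> complete_edges Vs \<longrightarrow> (c, d) \<in> complete_edges Vs \<longrightarrow>
        {a, b} \<noteq> {c, d} \<longrightarrow>
        \<not> (\<exists>C \<in> color_classes E. (a, b) \<in> C \<and> (c, d) \<in> C))"

definition maximal_simplex :: "'a set \<Rightarrow> ('a \<times> 'a) set \<Rightarrow> 'a set \<Rightarrow> bool" where
  "maximal_simplex V E Vs \<longleftrightarrow> simplex V E Vs \<and> \<not> (\<exists>Vs'. simplex V E Vs' \<and> Vs \<subset> Vs')"

definition multiplex :: "('a \<times> 'a) set \<Rightarrow> 'a set \<Rightarrow> ('a \<times> 'a) set" where
  "multiplex E Vs = \<Union> {C \<in> color_classes E. C \<inter> complete_edges Vs \<noteq> {}}"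

definition maximal_multiplex :: "'a set \<Rightarrow> ('a \<times> 'a) set \<Rightarrow> ('a \<times> 'a) set \<Rightarrow> bool" where
  "maximal_multiplex V E M \<longleftrightarrow> (\<exists>Vs. maximal_simplex V E Vs \<and> M = multiplex E Vs)"

definition spanned :: "('a \<times> 'a) set \<Rightarrow> 'a set" where
  "spanned A = {a. \<exists>b. (a, b) \<in> A \<or> (b, a) \<in> A}"

end

theory Submission
  imports Defs
begin


definition SC :: "('a \<times> 'a) set \<Rightarrow> ('a \<times> 'a) \<Rightarrow> ('a \<times> 'a) \<Rightarrow> bool" where
  "SC E e f \<longleftrightarrow> e \<in> E \<and> f \<in> E \<and>
     ((e, f) \<in> (Gamma E)\<^sup>* \<or> (e, prod.swap f) \<in> (Gamma E)\<^sup>*)"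

lemma Gamma_E: "(e, f) \<in> Gamma E \<Longrightarrow> e \<in> E \<and> f \<in> E"
  by (auto simp: Gamma_def)

lemma Gamma_sym: assumes "sym E" "(e, f) \<in> Gamma E" shows "(f, e) \<in> Gamma E"
proof -
  obtain a b a' b' where ef: "e = (a, b)" "f = (a', b')" by (cases e; cases f)
  have "(a, b) \<in> E" "(a', b') \<in> E" "(a = a' \<and> (b, b') \<notin> E) \<or> (b = b' \<and> (a, a') \<notin> E)"
    using assms(2) unfolding ef Gamma_def by auto
  moreover have "(b, b') \<notin> E \<Longrightarrow> (b', b) \<notin> E" "(a, a') \<notin> E \<Longrightarrow> (a', a) \<notin> E"
    using symD[OF assms(1)] by blast+
  ultimately show ?thesis unfolding ef Gamma_def by auto
qed

lemma Gamma_swap: "sym E \<Longrightarrow> (e, f) \<in> Gamma E \<Longrightarrow> (prod.swap e, prod.swap f) \<in> Gamma E"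
  by (cases e; cases f) (auto simp: Gamma_def dest: symD)

lemma rt_sym: assumes "sym E" "(e, f) \<in> (Gamma E)\<^sup>*" shows "(f, e) \<in> (Gamma E)\<^sup>*"
  using assms(2)
proof (induction rule: rtrancl_induct)
  case base then show ?case by simp
next
  case (step y z)
  then show ?case using Gamma_sym[OF assms(1) step(2)]
    by (meson converse_rtrancl_into_rtrancl)
qed

lemma rt_swap: assumes "sym E" "(e, f) \<in> (Gamma E)\<^sup>*" shows "(prod.swap e, prod.swap f) \<in> (Gamma E)\<^sup>*"
  using assms(2)
proof (induction rule: rtrancl_induct)
  case base then show ?case by simp
next
  case (step y z)
  then show ?case using Gamma_swap[OF assms(1) step(2)]
    by (meson rtrancl_into_rtrancl)
qed

lemma rt_E: assumes "(e, f) \<in> (Gamma E)\<^sup>*" "e \<in> E" shows "f \<in> E"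
  using assms by (induction rule: rtrancl_induct) (auto dest: Gamma_E)

lemma swap_E: "sym E \<Longrightarrow> e \<in> E \<Longrightarrow> prod.swap e \<in> E"
  by (cases e) (auto dest: symD)

lemma SC_refl: "e \<in> E \<Longrightarrow> SC E e e"
  by (simp add: SC_def)

lemma SC_sym: assumes "sym E" "SC E e f" shows "SC E f e"
proof -
  have "(f, e) \<in> (Gamma E)\<^sup>* \<or> (f, prod.swap e) \<in> (Gamma E)\<^sup>*"
  proof (cases "(e, f) \<in> (Gamma E)\<^sup>*")
    case True then show ?thesis using rt_sym[OF assms(1)] by blast
  next
    case False
    then have "(e, prod.swap f) \<in> (Gamma E)\<^sup>*" using assms(2) unfolding SC_def by blast
    then have "(prod.swap f, e) \<in> (Gamma E)\<^sup>*" using rt_sym[OF assms(1)] by blast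
    then have "(prod.swap (prod.swap f), prod.swap e) \<in> (Gamma E)\<^sup>*"
      using rt_swap[OF assms(1)] by blast
    then show ?thesis by simp
  qed
  then show ?thesis using assms unfolding SC_def by blast
qed

lemma SC_swapR: assumes "sym E" shows "SC E e (prod.swap f) \<longleftrightarrow> SC E e f"
  using swap_E[OF assms, of f] swap_E[OF assms, of "prod.swap f"]
  unfolding SC_def by auto

lemma SC_trans: assumes "sym E" "SC E e f" "SC E f g" shows "SC E e g"
proof -
  have ef: "(e, f) \<in> (Gamma E)\<^sup>* \<or> (e, prod.swap f) \<in> (Gamma E)\<^sup>*"
   and fg: "(f, g) \<in> (Gamma E)\<^sup>* \<or> (f, prod.swap g) \<in> (Gamma E)\<^sup>*"
    using assms unfolding SC_def by auto
  have "(e, g) \<in> (Gamma E)\<^sup>* \<or> (e, prod.swap g) \<in> (Gamma E)\<^sup>*"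
  proof -
    have 1: "(prod.swap f, prod.swap g) \<in> (Gamma E)\<^sup>*" if "(f, g) \<in> (Gamma E)\<^sup>*"
      using rt_swap[OF assms(1) that] .
    have 2: "(prod.swap f, g) \<in> (Gamma E)\<^sup>*" if "(f, prod.swap g) \<in> (Gamma E)\<^sup>*"
      using rt_swap[OF assms(1) that] by simp
    show ?thesis using ef fg 1 2 by (meson rtrancl_trans)
  qed
  then show ?thesis using assms unfolding SC_def by blast
qed

lemma SC_swapL: assumes "sym E" shows "SC E (prod.swap e) f \<longleftrightarrow> SC E e f"
  using SC_swapR[OF assms] SC_sym[OF assms] by metis

lemma SC_swapL': assumes "sym E" shows "SC E (b, a) f \<longleftrightarrow> SC E (a, b) f"
  using SC_swapL[OF assms, of "(a,b)"] by simp

lemma SC_swapR': assumes "sym E" shows "SC E e (b, a) \<longleftrightarrow> SC E e (a, b)"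
  using SC_swapR[OF assms, of e "(a,b)"] by simp

lemma SC_Gamma: "(e, f) \<in> Gamma E \<Longrightarrow> SC E e f"
  using Gamma_E unfolding SC_def by blast

lemma SC_rt: "(e, f) \<in> (Gamma E)\<^sup>* \<Longrightarrow> e \<in> E \<Longrightarrow> SC E e f"
  using rt_E unfolding SC_def by blast

lemma in_color_SC: assumes "sym E" "g \<in> E"
    "e \<in> implication_class E g \<union> (implication_class E g)\<inverse>"
  shows "SC E g e"
proof (cases "e \<in> implication_class E g")
  case True
  then have "e \<in> E" "(g, e) \<in> (Gamma E)\<^sup>*" unfolding implication_class_def by auto
  then show ?thesis using assms(2) unfolding SC_def by blast
next
  case False
  then have "prod.swap e \<in> implication_class E g" using assms(3) by (cases e) auto
  then have "prod.swap e \<in> E" "(g, prod.swap e) \<in> (Gamma E)\<^sup>*"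
    unfolding implication_class_def by auto
  moreover have "e \<in> E" using swap_E[OF assms(1) calculation(1)] by simp
  ultimately show ?thesis using assms(2) unfolding SC_def by blast
qed

lemma color_SC: assumes "sym E"
  shows "(\<exists>C\<in>color_classes E. e \<in> C \<and> f \<in> C) \<longleftrightarrow> SC E e f"
proof
  assume "\<exists>C\<in>color_classes E. e \<in> C \<and> f \<in> C"
  then obtain C where C: "C \<in> color_classes E" "e \<in> C" "f \<in> C" by blast
  then obtain g where g: "g \<in> E" and Cg: "C = implication_class E g \<union> (implication_class E g)\<inverse>"
    unfolding color_classes_def implication_classes_def by blast
  have ge: "SC E g e" using in_color_SC[OF assms g] C Cg by blast
  have gf: "SC E g f" using in_color_SC[OF assms g] C Cg by blast
  show "SC E e f" using SC_trans[OF assms SC_sym[OF assms ge] gf] .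
next
  assume sc: "SC E e f"
  let ?C = "implication_class E e \<union> (implication_class E e)\<inverse>"
  have eE: "e \<in> E" and fE: "f \<in> E" using sc unfolding SC_def by auto
  have "?C \<in> color_classes E" using eE unfolding color_classes_def implication_classes_def
    by blast
  moreover have "e \<in> ?C" using eE unfolding implication_class_def by blast
  moreover have "f \<in> ?C"
  proof (cases "(e, f) \<in> (Gamma E)\<^sup>*")
    case True then show ?thesis using fE unfolding implication_class_def by blast
  next
    case False
    then have "(e, prod.swap f) \<in> (Gamma E)\<^sup>*" using sc unfolding SC_def by blast
    then have "prod.swap f \<in> implication_class E e"
      using swap_E[OF assms fE] unfolding implication_class_def by blast
    then show ?thesis by (cases f) auto
  qed
  ultimately have facts: "?C \<in> color_classes E" "e \<in> ?C" "f \<in> ?C" by auto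
  show "\<exists>C\<in>color_classes E. e \<in> C \<and> f \<in> C"
  proof (rule bexI[of _ ?C])
    show "e \<in> ?C \<and> f \<in> ?C" using facts(2,3) by (rule conjI)
  qed (rule facts(1))
qed

lemma simplex_SC:
  assumes "sym E" "simplex V E S" "(a, b) \<in> complete_edges S" "(c, d) \<in> complete_edges S"
    "{a, b} \<noteq> {c, d}"
  shows "\<not> SC E (a, b) (c, d)"
proof -
  have "\<not> (\<exists>C \<in> color_classes E. (a, b) \<in> C \<and> (c, d) \<in> C)"
    using assms(2-5) unfolding simplex_def by blast
  then show ?thesis using color_SC[OF assms(1), of "(a,b)" "(c,d)"] by simp
qed

lemma multiplex_iff: assumes "sym E"
  shows "e \<in> multiplex E S \<longleftrightarrow> (\<exists>a b. (a, b) \<in> complete_edges S \<and> SC E (a, b) e)"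
proof
  assume "e \<in> multiplex E S"
  then obtain C where C: "C \<in> color_classes E" "e \<in> C" "C \<inter> complete_edges S \<noteq> {}"
    unfolding multiplex_def by blast
  then obtain a b where ab: "(a, b) \<in> C" "(a, b) \<in> complete_edges S" by fast
  have "\<exists>C\<in>color_classes E. (a, b) \<in> C \<and> e \<in> C" using C ab by blast
  then have "SC E (a, b) e" using color_SC[OF assms] by (rule iffD1[rotated])
  then show "\<exists>a b. (a, b) \<in> complete_edges S \<and> SC E (a, b) e" using ab by blast
next
  assume "\<exists>a b. (a, b) \<in> complete_edges S \<and> SC E (a, b) e"
  then obtain a b where ab: "(a, b) \<in> complete_edges S" "SC E (a, b) e" by blast
  have "\<exists>C\<in>color_classes E. (a, b) \<in> C \<and> e \<in> C"
    using color_SC[OF assms] ab(2) by (rule iffD2)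
  then obtain C where "C \<in> color_classes E" "(a, b) \<in> C" "e \<in> C"
    by blast
  then have "C \<in> {C \<in> color_classes E. C \<inter> complete_edges S \<noteq> {}}" using ab by blast
  from UnionI[OF this \<open>e \<in> C\<close>] show "e \<in> multiplex E S" unfolding multiplex_def .
qed

lemma inX: assumes "sym E"
  shows "x \<in> spanned (multiplex E S) \<longleftrightarrow>
    (\<exists>a b y. (a, b) \<in> complete_edges S \<and> SC E (a, b) (x, y))"
proof
  assume "x \<in> spanned (multiplex E S)"
  then obtain y where "(x, y) \<in> multiplex E S \<or> (y, x) \<in> multiplex E S"
    unfolding spanned_def by blast
  then obtain a b where ab: "(a, b) \<in> complete_edges S"
    "SC E (a, b) (x, y) \<or> SC E (a, b) (y, x)"
    unfolding multiplex_iff[OF assms] by blast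
  then have "SC E (a, b) (x, y)" using SC_swapR'[OF assms, of "(a, b)" x y] by blast
  then show "\<exists>a b y. (a, b) \<in> complete_edges S \<and> SC E (a, b) (x, y)" using ab(1) by blast
next
  assume "\<exists>a b y. (a, b) \<in> complete_edges S \<and> SC E (a, b) (x, y)"
  then obtain y where "(x, y) \<in> multiplex E S" unfolding multiplex_iff[OF assms] by blast
  then show "x \<in> spanned (multiplex E S)" unfolding spanned_def by blast
qed



lemma Gamma_iff: "((x, y), (x', y')) \<in> Gamma E \<longleftrightarrow>
   (x, y) \<in> E \<and> (x', y') \<in> E \<and> ((x = x' \<and> (y, y') \<notin> E) \<or> (y = y' \<and> (x, x') \<notin> E))"
  by (simp add: Gamma_def)

lemma symE: "sym E \<Longrightarrow> (a, b) \<in> E \<longleftrightarrow> (b, a) \<in> E"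
  by (auto dest: symD)

lemma partD: "partitive V E Y \<Longrightarrow> a \<in> Y \<Longrightarrow> b \<in> Y \<Longrightarrow> c \<in> V \<Longrightarrow> c \<notin> Y \<Longrightarrow>
    ((a, c) \<in> E \<longleftrightarrow> (b, c) \<in> E)"
  unfolding partitive_def by blast

lemma partD2: "partitive V E Y \<Longrightarrow> a \<in> Y \<Longrightarrow> b \<in> Y \<Longrightarrow> c \<in> V \<Longrightarrow> c \<notin> Y \<Longrightarrow>
    ((c, a) \<in> E \<longleftrightarrow> (c, b) \<in> E)"
  unfolding partitive_def by blast

lemma partI:
  assumes "sym E" "Y \<subseteq> V"
    "\<And>a b c. a \<in> Y \<Longrightarrow> b \<in> Y \<Longrightarrow> c \<in> V \<Longrightarrow> c \<notin> Y \<Longrightarrow> (a, c) \<in> E \<Longrightarrow> (b, c) \<in> E"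
  shows "partitive V E Y"
  unfolding partitive_def
proof (intro conjI ballI)
  show "Y \<subseteq> V" by fact
  fix a b c assume abc: "a \<in> Y" "b \<in> Y" "c \<in> V - Y"
  show "(a, c) \<in> E \<longleftrightarrow> (b, c) \<in> E" using assms(3)[of a b c] assms(3)[of b a c] abc by blast
  then show "(c, a) \<in> E \<longleftrightarrow> (c, b) \<in> E" using symE[OF assms(1)] by metis
qed

lemma ce_E: "simplex V E S \<Longrightarrow> (a, b) \<in> complete_edges S \<Longrightarrow> (a, b) \<in> E"
  unfolding simplex_def by blast

lemma ce_iff: "(a, b) \<in> complete_edges S \<longleftrightarrow> a \<in> S \<and> b \<in> S \<and> a \<noteq> b"
  by (simp add: complete_edges_def)

lemma card2_other:
  assumes "finite S" "2 \<le> card S" "s \<in> S" shows "\<exists>s'\<in>S. s' \<noteq> s"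
proof (rule ccontr)
  assume "\<not> ?thesis"
  then have "S \<subseteq> {s}" by blast
  then have "card S \<le> 1" using card_mono[of "{s}" S] by simp
  then show False using assms(2) by simp
qed

lemma card2_two:
  assumes "finite S" "2 \<le> card S" obtains s s' where "s \<in> S" "s' \<in> S" "s \<noteq> s'"
proof -
  have "S \<noteq> {}" using assms by auto
  then obtain s where "s \<in> S" by blast
  then show ?thesis using card2_other[OF assms] that by blast
qed

lemma SX:
  assumes sym: "sym E" and S: "simplex V E S"
  shows "S \<subseteq> spanned (multiplex E S)"
proof
  fix s assume s: "s \<in> S"
  obtain s' where s': "s' \<in> S" "s' \<noteq> s" using card2_other[OF _ _ s] S unfolding simplex_def by blast
  have ce: "(s, s') \<in> complete_edges S" using s s' by (simp add: ce_iff)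
  then have "SC E (s, s') (s, s')" using SC_refl ce_E[OF S] by blast
  then show "s \<in> spanned (multiplex E S)" using ce inX[OF sym] by blast
qed

lemma LA:
  assumes sym: "sym E" and S: "simplex V E S" and c: "c \<notin> spanned (multiplex E S)"
    and ab: "(a, b) \<in> complete_edges S" and sc: "SC E (a, b) (u, w)" and uc: "(u, c) \<in> E"
  shows "(w, c) \<in> E"
proof (rule ccontr)
  assume wc: "(w, c) \<notin> E"
  have "(u, w) \<in> E" using sc unfolding SC_def by blast
  then have "((u, w), (u, c)) \<in> Gamma E" using wc uc by (simp add: Gamma_iff)
  then have "SC E (u, w) (u, c)" by (rule SC_Gamma)
  then have "SC E (a, b) (u, c)" using SC_trans[OF sym sc] by blast
  then have "SC E (a, b) (c, u)" using SC_swapR'[OF sym] by blast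
  then have "c \<in> spanned (multiplex E S)" using ab inX[OF sym] by blast
  then show False using c by blast
qed

lemma LA':
  assumes sym: "sym E" and S: "simplex V E S" and c: "c \<notin> spanned (multiplex E S)"
    and ab: "(a, b) \<in> complete_edges S" and sc: "SC E (a, b) (u, w)"
  shows "(u, c) \<in> E \<longleftrightarrow> (w, c) \<in> E"
proof -
  have sc2: "SC E (a, b) (w, u)" using sc SC_swapR'[OF sym] by blast
  show ?thesis using LA[OF sym S c ab sc] LA[OF sym S c ab sc2] by blast
qed

lemma adj_chain:
  assumes sym: "sym E" and S: "simplex V E S" and c: "c \<notin> spanned (multiplex E S)"
    and ab: "(a, b) \<in> complete_edges S" and rt: "((a, b), (x, y)) \<in> (Gamma E)\<^sup>*"
  shows "((x, c) \<in> E \<longleftrightarrow> (a, c) \<in> E) \<and> ((y, c) \<in> E \<longleftrightarrow> (a, c) \<in> E)"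
  using rt
proof (induction rule: rtrancl_induct2)
  case refl
  have "SC E (a, b) (a, b)" using SC_refl ce_E[OF S ab] by blast
  then show ?case using LA'[OF sym S c ab] by blast
next
  case (step x y x' y')
  have abE: "(a, b) \<in> E" using ce_E[OF S ab] .
  have "((a, b), (x', y')) \<in> (Gamma E)\<^sup>*" using step.hyps by (rule rtrancl_into_rtrancl)
  then have "SC E (a, b) (x', y')" using SC_rt abE by blast
  then have e: "(x', c) \<in> E \<longleftrightarrow> (y', c) \<in> E" using LA'[OF sym S c ab] by blast
  have "x = x' \<or> y = y'" using step.hyps(2) by (simp add: Gamma_iff) blast
  then show ?case using e step.IH by blast
qed

lemma adj_X:
  assumes sym: "sym E" and S: "simplex V E S" and c: "c \<notin> spanned (multiplex E S)"
    and x: "x \<in> spanned (multiplex E S)" and s: "s \<in> S"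
  shows "(x, c) \<in> E \<longleftrightarrow> (s, c) \<in> E"
proof -
  obtain a b y where ab: "(a, b) \<in> complete_edges S" and sc: "SC E (a, b) (x, y)"
    using x inX[OF sym] by blast
  have "((a, b), (x, y)) \<in> (Gamma E)\<^sup>* \<or> ((a, b), (y, x)) \<in> (Gamma E)\<^sup>*"
    using sc unfolding SC_def by simp
  then have 1: "(x, c) \<in> E \<longleftrightarrow> (a, c) \<in> E" using adj_chain[OF sym S c ab] by blast
  have aS: "a \<in> S" using ab by (simp add: ce_iff)
  have 2: "(a, c) \<in> E \<longleftrightarrow> (s, c) \<in> E"
  proof (cases "a = s")
    case False
    then have as: "(a, s) \<in> complete_edges S" using aS s by (simp add: ce_iff)
    have "SC E (a, s) (a, s)" using SC_refl ce_E[OF S as] by blast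
    then show ?thesis using LA'[OF sym S c as] by blast
  qed simp
  show ?thesis using 1 2 by blast
qed

lemma claim1:
  assumes sym: "sym E" and EV: "E \<subseteq> V \<times> V" and S: "simplex V E S"
  shows "partitive V E (spanned (multiplex E S))"
proof (rule partI[OF sym])
  show "spanned (multiplex E S) \<subseteq> V"
  proof
    fix x assume "x \<in> spanned (multiplex E S)"
    then obtain a b y where "SC E (a, b) (x, y)" using inX[OF sym] by blast
    then have "(x, y) \<in> E" unfolding SC_def by blast
    then show "x \<in> V" using EV by blast
  qed
next
  fix a b c assume a: "a \<in> spanned (multiplex E S)" and b: "b \<in> spanned (multiplex E S)"
    and c: "c \<notin> spanned (multiplex E S)" and ac: "(a, c) \<in> E"
  obtain s where s: "s \<in> S" using S card2_two unfolding simplex_def by metis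
  show "(b, c) \<in> E" using adj_X[OF sym S c a s] adj_X[OF sym S c b s] ac by blast
qed



lemma T3:
  assumes sym: "sym E" and va: "(v, a) \<in> E" and vb: "(v, b) \<in> E" and "v \<noteq> a" "v \<noteq> b"
    and nva: "\<not> SC E (v, a) (a, b)" and nvb: "\<not> SC E (v, b) (a, b)"
    and abE: "(a, b) \<in> E" and rt: "((a, b), (x, y)) \<in> (Gamma E)\<^sup>*"
  shows "v \<noteq> x \<and> v \<noteq> y \<and> (v, x) \<in> E \<and> (v, y) \<in> E \<and> \<not> SC E (v, x) (a, b) \<and> \<not> SC E (v, y) (a, b)"
  using rt
proof (induction rule: rtrancl_induct2)
  case refl
  then show ?case using assms by blast
next
  case (step x y x' y')
  have sc': "SC E (a, b) (x', y')"
    using SC_rt[OF rtrancl_into_rtrancl[OF step.hyps] abE] .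
  have scab: "SC E (x', y') (a, b)" using SC_sym[OF sym sc'] .
  have G: "(x, y) \<in> E" "(x', y') \<in> E" "(x = x' \<and> (y, y') \<notin> E) \<or> (y = y' \<and> (x, x') \<notin> E)"
    using step.hyps(2) by (simp_all add: Gamma_iff)
  from G(3) show ?case
  proof
    assume h: "x = x' \<and> (y, y') \<notin> E"
    have vy': "v \<noteq> y'"
    proof
      assume "v = y'"
      then have "SC E (x, v) (a, b)" using scab h by simp
      then have "SC E (v, x) (a, b)" using SC_swapL'[OF sym] by blast
      then show False using step.IH by blast
    qed
    have vy'E: "(v, y') \<in> E"
    proof (rule ccontr)
      assume nv: "(v, y') \<notin> E"
      have "(x, v) \<in> E" using step.IH symE[OF sym] by blast
      then have "((x, v), (x, y')) \<in> Gamma E" using nv G(2) h by (simp add: Gamma_iff)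
      then have "SC E (x, v) (x, y')" by (rule SC_Gamma)
      then have "SC E (x, v) (a, b)" using SC_trans[OF sym _ scab] h by simp
      then have "SC E (v, x) (a, b)" using SC_swapL'[OF sym] by blast
      then show False using step.IH by blast
    qed
    have "((v, y), (v, y')) \<in> Gamma E" using step.IH vy'E h by (simp add: Gamma_iff)
    then have "SC E (v, y) (v, y')" by (rule SC_Gamma)
    then have "\<not> SC E (v, y') (a, b)" using SC_trans[OF sym] step.IH by blast
    then show ?thesis using step.IH vy' vy'E h by blast
  next
    assume h: "y = y' \<and> (x, x') \<notin> E"
    have vx': "v \<noteq> x'"
    proof
      assume "v = x'"
      then have "SC E (v, y) (a, b)" using scab h by simp
      then show False using step.IH by blast
    qed
    have vx'E: "(v, x') \<in> E"
    proof (rule ccontr)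
      assume nv: "(v, x') \<notin> E"
      have "((v, y), (x', y)) \<in> Gamma E" using nv G(2) h step.IH by (simp add: Gamma_iff)
      then have "SC E (v, y) (x', y)" by (rule SC_Gamma)
      then have "SC E (v, y) (a, b)" using SC_trans[OF sym _ scab] h by simp
      then show False using step.IH by blast
    qed
    have "((v, x), (v, x')) \<in> Gamma E" using step.IH vx'E h by (simp add: Gamma_iff)
    then have "SC E (v, x) (v, x')" by (rule SC_Gamma)
    then have "\<not> SC E (v, x') (a, b)" using SC_trans[OF sym] step.IH by blast
    then show ?thesis using step.IH vx' vx'E h by blast
  qed
qed

lemma ce_mono: "U \<subseteq> T \<Longrightarrow> complete_edges U \<subseteq> complete_edges T"
  unfolding complete_edges_def by auto

lemma notin_X:
  assumes sym: "sym E" and T: "simplex V E T" and ST: "S \<subseteq> T" and v: "v \<in> T" "v \<notin> S"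
  shows "v \<notin> spanned (multiplex E S)"
proof
  assume "v \<in> spanned (multiplex E S)"
  then obtain a b y where ab: "(a, b) \<in> complete_edges S" and sc: "SC E (a, b) (v, y)"
    using inX[OF sym] by blast
  have abT: "(a, b) \<in> complete_edges T" using ab ce_mono[OF ST] by blast
  have a: "a \<in> T" "a \<noteq> v" and b: "b \<in> T" "b \<noteq> v" and "a \<noteq> b"
    using ab ST v by (auto simp: ce_iff)
  have vaT: "(v, a) \<in> complete_edges T" and vbT: "(v, b) \<in> complete_edges T"
    using a b v by (auto simp: ce_iff)
  have nva: "\<not> SC E (v, a) (a, b)"
    using simplex_SC[OF sym T vaT abT] a b \<open>a \<noteq> b\<close> by (auto simp: doubleton_eq_iff)
  have nvb: "\<not> SC E (v, b) (a, b)"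
    using simplex_SC[OF sym T vbT abT] a b \<open>a \<noteq> b\<close> by (auto simp: doubleton_eq_iff)
  have abE: "(a, b) \<in> E" using ce_E[OF T abT] .
  have T3': "\<And>x y. ((a, b), (x, y)) \<in> (Gamma E)\<^sup>* \<Longrightarrow> v \<noteq> x \<and> v \<noteq> y"
    using T3[OF sym ce_E[OF T vaT] ce_E[OF T vbT] _ _ nva nvb abE] a b by blast
  have "((a, b), (v, y)) \<in> (Gamma E)\<^sup>* \<or> ((a, b), (y, v)) \<in> (Gamma E)\<^sup>*"
    using sc unfolding SC_def by simp
  then show False using T3' by blast
qed

lemma FactM:
  assumes sym: "sym E" and EV: "E \<subseteq> V \<times> V" and Yp: "partitive V E Y"
    and uw: "u \<in> Y" "w \<in> Y" and rt: "((u, w), (x, y)) \<in> (Gamma E)\<^sup>*"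
  shows "x \<in> Y \<and> y \<in> Y"
  using rt
proof (induction rule: rtrancl_induct2)
  case refl then show ?case using uw by blast
next
  case (step x y x' y')
  have G: "(x, y) \<in> E" "(x', y') \<in> E" "(x = x' \<and> (y, y') \<notin> E) \<or> (y = y' \<and> (x, x') \<notin> E)"
    using step.hyps(2) by (simp_all add: Gamma_iff)
  from G(3) show ?case
  proof
    assume h: "x = x' \<and> (y, y') \<notin> E"
    have "y' \<in> Y"
    proof (rule ccontr)
      assume "y' \<notin> Y"
      moreover have "y' \<in> V" using G(2) EV by blast
      ultimately have "(x, y') \<in> E \<longleftrightarrow> (y, y') \<in> E" using partD[OF Yp] step.IH by blast
      then show False using G(2) h by simp
    qed
    then show ?case using step.IH h by blast
  next
    assume h: "y = y' \<and> (x, x') \<notin> E"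
    have "x' \<in> Y"
    proof (rule ccontr)
      assume "x' \<notin> Y"
      moreover have "x' \<in> V" using G(2) EV by blast
      ultimately have "(x', x) \<in> E \<longleftrightarrow> (x', y) \<in> E" using partD2[OF Yp] step.IH by blast
      then show False using G(2) h symE[OF sym] by auto
    qed
    then show ?case using step.IH h by blast
  qed
qed

lemma FactM_SC:
  assumes sym: "sym E" and EV: "E \<subseteq> V \<times> V" and Yp: "partitive V E Y"
    and uw: "u \<in> Y" "w \<in> Y" and sc: "SC E (u, w) (x, y)"
  shows "x \<in> Y \<and> y \<in> Y"
proof -
  have "((u, w), (x, y)) \<in> (Gamma E)\<^sup>* \<or> ((u, w), (y, x)) \<in> (Gamma E)\<^sup>*"
    using sc unfolding SC_def by simp
  then show ?thesis using FactM[OF sym EV Yp uw] by blast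
qed

lemma X_sub_module:
  assumes sym: "sym E" and EV: "E \<subseteq> V \<times> V" and S: "simplex V E S"
    and Yp: "partitive V E Y" and SY: "S \<subseteq> Y"
  shows "spanned (multiplex E S) \<subseteq> Y"
proof
  fix x assume "x \<in> spanned (multiplex E S)"
  then obtain a b y where ab: "(a, b) \<in> complete_edges S" and sc: "SC E (a, b) (x, y)"
    using inX[OF sym] by blast
  have "a \<in> Y" "b \<in> Y" using ab SY by (auto simp: ce_iff)
  then show "x \<in> Y" using FactM_SC[OF sym EV Yp _ _ sc] by blast
qed

lemma join_rt:
  assumes sym: "sym E" and EV: "E \<subseteq> V \<times> V" and Wp: "partitive V E (A \<union> B)"
    and disj: "A \<inter> B = {}" and join: "\<forall>a\<in>A. \<forall>b\<in>B. (a, b) \<in> E"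
    and cA: "\<forall>a\<in>A. (c, a) \<in> E" and a0: "a0 \<in> A" and b0: "b0 \<in> B"
    and rt: "((a0, b0), (x, y)) \<in> (Gamma E)\<^sup>*"
  shows "x \<in> A \<and> y \<in> B \<and> ((c, a0), (c, x)) \<in> (Gamma E)\<^sup>*"
  using rt
proof (induction rule: rtrancl_induct2)
  case refl then show ?case using a0 b0 by blast
next
  case (step x y x' y')
  have G: "(x, y) \<in> E" "(x', y') \<in> E" "(x = x' \<and> (y, y') \<notin> E) \<or> (y = y' \<and> (x, x') \<notin> E)"
    using step.hyps(2) by (simp_all add: Gamma_iff)
  from G(3) show ?case
  proof
    assume h: "x = x' \<and> (y, y') \<notin> E"
    have nA: "y' \<notin> A"
    proof
      assume "y' \<in> A"
      then have "(y', y) \<in> E" using join step.IH by blast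
      then show False using h symE[OF sym] by blast
    qed
    have "y' \<in> A \<union> B"
    proof (rule ccontr)
      assume "y' \<notin> A \<union> B"
      moreover have "y' \<in> V" using G(2) EV by blast
      ultimately have "(x, y') \<in> E \<longleftrightarrow> (y, y') \<in> E" using partD[OF Wp] step.IH by blast
      then show False using G(2) h by simp
    qed
    then show ?case using nA step.IH h by blast
  next
    assume h: "y = y' \<and> (x, x') \<notin> E"
    have nB: "x' \<notin> B"
    proof
      assume "x' \<in> B"
      then have "(x, x') \<in> E" using join step.IH by blast
      then show False using h by blast
    qed
    have xA: "x' \<in> A"
    proof (rule ccontr)
      assume "x' \<notin> A"
      then have "x' \<notin> A \<union> B" using nB by blast
      moreover have "x' \<in> V" using G(2) EV by blast
      ultimately have "(x', x) \<in> E \<longleftrightarrow> (x', y) \<in> E" using partD2[OF Wp] step.IH by blast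
      then show False using G(2) h symE[OF sym] by auto
    qed
    have "((c, x), (c, x')) \<in> Gamma E" using cA step.IH xA h by (simp add: Gamma_iff)
    then have "((c, a0), (c, x')) \<in> (Gamma E)\<^sup>*" using step.IH by (meson rtrancl_into_rtrancl)
    then show ?case using xA step.IH h by blast
  qed
qed

lemma join_SC:
  assumes sym: "sym E" and EV: "E \<subseteq> V \<times> V" and Wp: "partitive V E (A \<union> B)"
    and disj: "A \<inter> B = {}" and join: "\<forall>a\<in>A. \<forall>b\<in>B. (a, b) \<in> E"
    and cA: "\<forall>a\<in>A. (c, a) \<in> E" and a: "a \<in> A" "a' \<in> A" and b: "b \<in> B"
    and sc: "SC E (a, b) (a', b)"
  shows "SC E (c, a) (c, a')"
proof -
  have "((a, b), (a', b)) \<in> (Gamma E)\<^sup>* \<or> ((a, b), (b, a')) \<in> (Gamma E)\<^sup>*"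
    using sc unfolding SC_def by simp
  moreover have "((a, b), (b, a')) \<notin> (Gamma E)\<^sup>*"
    using join_rt[OF sym EV Wp disj join cA a(1) b] disj b by blast
  ultimately have "((a, b), (a', b)) \<in> (Gamma E)\<^sup>*" by blast
  then have "((c, a), (c, a')) \<in> (Gamma E)\<^sup>*"
    using join_rt[OF sym EV Wp disj join cA a(1) b] by blast
  then show ?thesis using SC_rt cA a by blast
qed



lemma simplex_subset:
  assumes T: "simplex V E T" and UT: "U \<subseteq> T" and c: "2 \<le> card U"
  shows "simplex V E U"
proof -
  have fin: "finite U" using T UT finite_subset unfolding simplex_def by blast
  have UV: "U \<subseteq> V" using T UT unfolding simplex_def by blast
  have ceU: "complete_edges U \<subseteq> E" using T ce_mono[OF UT] unfolding simplex_def by blast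
  have col: "\<forall>a b c d. (a, b) \<in> complete_edges U \<longrightarrow> (c, d) \<in> complete_edges U \<longrightarrow>
        {a, b} \<noteq> {c, d} \<longrightarrow>
        \<not> (\<exists>C \<in> color_classes E. (a, b) \<in> C \<and> (c, d) \<in> C)"
    using T ce_mono[OF UT] unfolding simplex_def by blast
  show ?thesis unfolding simplex_def using fin c UV ceU col by blast
qed

lemma SC_pairL: "sym E \<Longrightarrow> {a, b} = {c, d} \<Longrightarrow> SC E (a, b) f \<longleftrightarrow> SC E (c, d) f"
  using SC_swapL' by (metis doubleton_eq_iff)

lemma SC_pairR: "sym E \<Longrightarrow> {a, b} = {c, d} \<Longrightarrow> SC E f (a, b) \<longleftrightarrow> SC E f (c, d)"
  using SC_swapR' by (metis doubleton_eq_iff)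

lemma ce_insert_cases:
  assumes "(a, b) \<in> complete_edges (insert r S)"
  shows "(a, b) \<in> complete_edges S \<or> (\<exists>s\<in>S. s \<noteq> r \<and> {a, b} = {r, s})"
  using assms by (auto simp: ce_iff)

lemma simplex_insert:
  assumes sym: "sym E" and S: "simplex V E S" and rV: "r \<in> V" and rS: "r \<notin> S"
    and adj: "\<forall>s\<in>S. (r, s) \<in> E"
    and nM: "\<forall>s\<in>S. \<forall>a b. (a, b) \<in> complete_edges S \<longrightarrow> \<not> SC E (r, s) (a, b)"
    and dist: "\<forall>s\<in>S. \<forall>s'\<in>S. s \<noteq> s' \<longrightarrow> \<not> SC E (r, s) (r, s')"
  shows "simplex V E (insert r S)"
proof -
  have fin: "finite (insert r S)" using S unfolding simplex_def by simp
  have c: "2 \<le> card (insert r S)" using S rS unfolding simplex_def by simp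
  have V: "insert r S \<subseteq> V" using S rV unfolding simplex_def by simp
  have ceE: "complete_edges (insert r S) \<subseteq> E"
  proof
    fix e assume e: "e \<in> complete_edges (insert r S)"
    obtain x y where xy: "e = (x, y)" by (cases e)
    show "e \<in> E"
    proof (cases "x = r \<or> y = r")
      case True
      then show ?thesis using e xy adj symE[OF sym] by (auto simp: ce_iff)
    next
      case False
      then have "(x, y) \<in> complete_edges S" using e xy by (auto simp: ce_iff)
      then show ?thesis using ce_E[OF S] xy by blast
    qed
  qed
  have col: "\<forall>a b c d. (a, b) \<in> complete_edges (insert r S) \<longrightarrow> (c, d) \<in> complete_edges (insert r S) \<longrightarrow>
        {a, b} \<noteq> {c, d} \<longrightarrow>
        \<not> (\<exists>C \<in> color_classes E. (a, b) \<in> C \<and> (c, d) \<in> C)"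
  proof (intro allI impI)
    fix a b c d
    assume ab: "(a, b) \<in> complete_edges (insert r S)" and cd: "(c, d) \<in> complete_edges (insert r S)"
      and ne: "{a, b} \<noteq> {c, d}"
    have "\<not> SC E (a, b) (c, d)"
    proof
      assume sc: "SC E (a, b) (c, d)"
      from ce_insert_cases[OF ab] show False
      proof
        assume abS: "(a, b) \<in> complete_edges S"
        from ce_insert_cases[OF cd] show False
        proof
          assume cdS: "(c, d) \<in> complete_edges S"
          show False using simplex_SC[OF sym S abS cdS ne] sc by blast
        next
          assume "\<exists>s\<in>S. s \<noteq> r \<and> {c, d} = {r, s}"
          then obtain s where s: "s \<in> S" "{c, d} = {r, s}" by blast
          have "SC E (a, b) (r, s)" using sc SC_pairR[OF sym s(2)] by blast
          then have "SC E (r, s) (a, b)" using SC_sym[OF sym] by blast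
          then show False using nM s abS by blast
        qed
      next
        assume "\<exists>s\<in>S. s \<noteq> r \<and> {a, b} = {r, s}"
        then obtain s where s: "s \<in> S" "{a, b} = {r, s}" by blast
        have sc1: "SC E (r, s) (c, d)" using sc SC_pairL[OF sym s(2)] by blast
        from ce_insert_cases[OF cd] show False
        proof
          assume cdS: "(c, d) \<in> complete_edges S"
          show False using nM s cdS sc1 by blast
        next
          assume "\<exists>s\<in>S. s \<noteq> r \<and> {c, d} = {r, s}"
          then obtain s' where s': "s' \<in> S" "{c, d} = {r, s'}" by blast
          have "SC E (r, s) (r, s')" using sc1 SC_pairR[OF sym s'(2)] by blast
          moreover have "s \<noteq> s'" using ne s s' by auto
          ultimately show False using dist s s' by blast
        qed
      qed
    qed
    then show "\<not> (\<exists>C \<in> color_classes E. (a, b) \<in> C \<and> (c, d) \<in> C)"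
      using color_SC[OF sym, of "(a,b)" "(c,d)"] by simp
  qed
  show ?thesis unfolding simplex_def using fin c V ceE col by blast
qed



lemma claim2:
  assumes sym: "sym E" and EV: "E \<subseteq> V \<times> V" and mx: "maximal_simplex V E S"
  shows "strong_partitive V E (spanned (multiplex E S))"
proof -
  define X where "X = spanned (multiplex E S)"
  have S: "simplex V E S" using mx unfolding maximal_simplex_def by blast
  have Xp: "partitive V E X" unfolding X_def using claim1[OF sym EV S] .
  have SX: "S \<subseteq> X" unfolding X_def using SX[OF sym S] .
  have XV: "X \<subseteq> V" using Xp unfolding partitive_def by blast
  have "\<forall>Y. partitive V E Y \<longrightarrow> X \<inter> Y \<noteq> {} \<longrightarrow> X \<subseteq> Y \<or> Y \<subseteq> X"
  proof (intro allI impI)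
    fix Y assume Yp: "partitive V E Y" and XY: "X \<inter> Y \<noteq> {}"
    have YV: "Y \<subseteq> V" using Yp unfolding partitive_def by blast
    show "X \<subseteq> Y \<or> Y \<subseteq> X"
    proof (rule ccontr)
      assume nn: "\<not> (X \<subseteq> Y \<or> Y \<subseteq> X)"
      obtain p where p: "p \<in> X" "p \<in> Y" using XY by blast
      obtain r where r: "r \<in> Y" "r \<notin> X" using nn by blast
      have "\<not> S \<subseteq> Y" using X_sub_module[OF sym EV S Yp] nn unfolding X_def by blast
      then obtain s2 where s2: "s2 \<in> S" "s2 \<notin> Y" by blast
      have Qp: "partitive V E (X - Y)"
      proof (rule partI[OF sym])
        show "X - Y \<subseteq> V" using XV by blast
      next
        fix a b c assume a: "a \<in> X - Y" and b: "b \<in> X - Y" and c: "c \<in> V" "c \<notin> X - Y"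
          and ac: "(a, c) \<in> E"
        show "(b, c) \<in> E"
        proof (cases "c \<in> X")
          case True
          then have cY: "c \<in> Y" using c by blast
          have rV: "r \<in> V" using r YV by blast
          have "(c, a) \<in> E" using ac symE[OF sym] by blast
          then have "(r, a) \<in> E" using partD[OF Yp cY r(1), of a] a XV by blast
          then have "(a, r) \<in> E" using symE[OF sym] by blast
          then have "(b, r) \<in> E" using partD[OF Xp _ _ rV r(2), of a b] a b by blast
          then have "(r, b) \<in> E" using symE[OF sym] by blast
          then have "(c, b) \<in> E" using partD[OF Yp cY r(1), of b] b XV by blast
          then show ?thesis using symE[OF sym] by blast
        next
          case False
          then show ?thesis using partD[OF Xp _ _ c(1) False, of a b] a b ac by blast
        qed
      qed
      have "S \<inter> Y \<noteq> {}"
      proof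
        assume "S \<inter> Y = {}"
        then have "S \<subseteq> X - Y" using SX by blast
        then have "X \<subseteq> X - Y" using X_sub_module[OF sym EV S Qp] unfolding X_def by blast
        then show False using p by blast
      qed
      then obtain s1 where s1: "s1 \<in> S" "s1 \<in> Y" by blast
      have s12: "s1 \<noteq> s2" using s1 s2 by blast
      have s12E: "(s1, s2) \<in> E" using ce_E[OF S] s1 s2 s12 by (simp add: ce_iff)
      have s2V: "s2 \<in> V" using s2 SX XV by blast
      have s2Y: "\<forall>y\<in>Y. (y, s2) \<in> E" using partD[OF Yp s1(2) _ s2V s2(2)] s12E by blast
      have RX: "\<forall>r'\<in>Y - X. \<forall>x\<in>X. (x, r') \<in> E"
      proof (intro ballI)
        fix r' x assume r': "r' \<in> Y - X" and x: "x \<in> X"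
        have "(s2, r') \<in> E" using s2Y r' symE[OF sym] by blast
        moreover have "r' \<in> V" using r' YV by blast
        ultimately show "(x, r') \<in> E" using partD[OF Xp _ x, of s2 r'] s2 SX r' by blast
      qed
      have s1Q: "\<forall>q\<in>X - Y. (q, s1) \<in> E"
      proof
        fix q assume q: "q \<in> X - Y"
        have "(s2, s1) \<in> E" using s12E symE[OF sym] by blast
        moreover have "s1 \<in> V" using s1 SX XV by blast
        moreover have "s2 \<in> X - Y" using s2 SX by blast
        ultimately show "(q, s1) \<in> E" using partD[OF Qp _ q, of s2 s1] s1 by blast
      qed
      have Wp: "partitive V E ((X - Y) \<union> (Y - X))"
      proof (rule partI[OF sym])
        show "(X - Y) \<union> (Y - X) \<subseteq> V" using XV YV by blast
      next
        fix a b c assume a: "a \<in> (X - Y) \<union> (Y - X)" and b: "b \<in> (X - Y) \<union> (Y - X)"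
          and c: "c \<in> V" "c \<notin> (X - Y) \<union> (Y - X)" and ac: "(a, c) \<in> E"
        show "(b, c) \<in> E"
        proof (cases "c \<in> X")
          case True
          then have cY: "c \<in> Y" using c by blast
          show ?thesis
          proof (cases "b \<in> X - Y")
            case True
            have "(s2, c) \<in> E" using s2Y cY symE[OF sym] by blast
            moreover have "s2 \<in> X - Y" using s2 SX by blast
            ultimately show ?thesis using partD[OF Qp _ True c(1), of s2] c(2) by blast
          next
            case False
            then have "b \<in> Y - X" using b by blast
            then have "(c, b) \<in> E" using RX \<open>c \<in> X\<close> by blast
            then show ?thesis using symE[OF sym] by blast
          qed
        next
          case False
          then have cY: "c \<notin> Y" using c by blast
          have gen: "(z, c) \<in> E \<longleftrightarrow> (p, c) \<in> E" if z: "z \<in> (X - Y) \<union> (Y - X)" for z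
          proof (cases "z \<in> X")
            case True
            show ?thesis by (rule partD[OF Xp True p(1) c(1) False])
          next
            case False
            then have "z \<in> Y" using z by blast
            then show ?thesis using partD[OF Yp _ p(2) c(1) cY] by blast
          qed
          show ?thesis using gen[OF a] gen[OF b] ac by blast
        qed
      qed
      have dist: "\<forall>s\<in>S. \<forall>s'\<in>S. s \<noteq> s' \<longrightarrow> \<not> SC E (r, s) (r, s')"
      proof (intro ballI impI notI)
        fix s s' assume s: "s \<in> S" and s': "s' \<in> S" and ne: "s \<noteq> s'" and sc: "SC E (r, s) (r, s')"
        have sc2: "SC E (s, r) (s', r)" using sc SC_swapL'[OF sym] SC_swapR'[OF sym] by blast
        have rYX: "r \<in> Y - X" using r by blast
        show False
        proof (cases "s \<in> Y")
          case sY: True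
          show False
          proof (cases "s' \<in> Y")
            case s'Y: True
            have W: "(X \<inter> Y) \<union> (Y - X) = Y" by blast
            have Wp': "partitive V E ((X \<inter> Y) \<union> (Y - X))" using Yp W by simp
            have j: "\<forall>a\<in>X \<inter> Y. \<forall>b\<in>Y - X. (a, b) \<in> E" using RX by blast
            have cA: "\<forall>a\<in>X \<inter> Y. (s2, a) \<in> E" using s2Y symE[OF sym] by blast
            have "SC E (s2, s) (s2, s')"
              using join_SC[OF sym EV Wp' _ j cA _ _ rYX sc2] s s' sY s'Y SX by blast
            moreover have "(s2, s) \<in> complete_edges S" "(s2, s') \<in> complete_edges S"
              using s s' s2 sY s'Y by (auto simp: ce_iff)
            moreover have "{s2, s} \<noteq> {s2, s'}" using ne by (auto simp: doubleton_eq_iff)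
            ultimately show False using simplex_SC[OF sym S] by blast
          next
            case s'Y: False
            have "r \<in> Y" using r by blast
            have "(r, s) \<in> E" using RX rYX s SX symE[OF sym] by blast
            then have "s' \<in> Y" using FactM_SC[OF sym EV Yp \<open>r \<in> Y\<close> sY sc] by blast
            then show False using s'Y by blast
          qed
        next
          case sY: False
          show False
          proof (cases "s' \<in> Y")
            case s'Y: True
            have "SC E (r, s') (r, s)" using SC_sym[OF sym sc] .
            then have "s \<in> Y" using FactM_SC[OF sym EV Yp r(1) s'Y] by blast
            then show False using sY by blast
          next
            case s'Y: False
            have j: "\<forall>a\<in>X - Y. \<forall>b\<in>Y - X. (a, b) \<in> E" using RX by blast
            have cA: "\<forall>a\<in>X - Y. (s1, a) \<in> E" using s1Q symE[OF sym] by blast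
            have "SC E (s1, s) (s1, s')"
              using join_SC[OF sym EV Wp _ j cA _ _ rYX sc2] s s' sY s'Y SX by blast
            moreover have "(s1, s) \<in> complete_edges S" "(s1, s') \<in> complete_edges S"
              using s s' s1 sY s'Y by (auto simp: ce_iff)
            moreover have "{s1, s} \<noteq> {s1, s'}" using ne by (auto simp: doubleton_eq_iff)
            ultimately show False using simplex_SC[OF sym S] by blast
          qed
        qed
      qed
      have rS: "r \<notin> S" using r SX by blast
      have rV: "r \<in> V" using r YV by blast
      have adj: "\<forall>s\<in>S. (r, s) \<in> E" using RX r SX symE[OF sym] by blast
      have nM: "\<forall>s\<in>S. \<forall>a b. (a, b) \<in> complete_edges S \<longrightarrow> \<not> SC E (r, s) (a, b)"
      proof (intro ballI allI impI notI)
        fix s a b assume s: "s \<in> S" and ab: "(a, b) \<in> complete_edges S" and sc: "SC E (r, s) (a, b)"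
        have "SC E (a, b) (r, s)" using SC_sym[OF sym sc] .
        then have "r \<in> X" unfolding X_def using inX[OF sym] ab by blast
        then show False using r by blast
      qed
      have "simplex V E (insert r S)" using simplex_insert[OF sym S rV rS adj nM dist] .
      moreover have "S \<subset> insert r S" using rS by blast
      ultimately show False using mx unfolding maximal_simplex_def by blast
    qed
  qed
  then show ?thesis using Xp unfolding strong_partitive_def X_def by blast
qed

lemma claim3:
  assumes sym: "sym E" and EV: "E \<subseteq> V \<times> V" and S: "simplex V E S"
    and nmx: "\<not> maximal_simplex V E S"
  shows "\<not> strong_partitive V E (spanned (multiplex E S))"
proof
  assume st: "strong_partitive V E (spanned (multiplex E S))"
  obtain T where T: "simplex V E T" and ST: "S \<subset> T" using nmx S unfolding maximal_simplex_def by blast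
  obtain v where v: "v \<in> T" "v \<notin> S" using ST by blast
  obtain s s' where ss: "s \<in> S" "s' \<in> S" "s \<noteq> s'"
    using S card2_two unfolding simplex_def by metis
  define S' where "S' = insert v (S - {s})"
  have S'T: "S' \<subseteq> T" using ST v unfolding S'_def by blast
  have finT: "finite T" using T unfolding simplex_def by blast
  have "{v, s'} \<subseteq> S'" using ss unfolding S'_def by blast
  moreover have "v \<noteq> s'" using v ss by blast
  ultimately have "2 \<le> card S'" using card_mono[OF finite_subset[OF S'T finT], of "{v, s'}"] by simp
  then have S': "simplex V E S'" using simplex_subset[OF T S'T] by blast
  define X where "X = spanned (multiplex E S)"
  define Y where "Y = spanned (multiplex E S')"
  have Yp: "partitive V E Y" unfolding Y_def using claim1[OF sym EV S'] .
  have "s' \<in> X" unfolding X_def using SX[OF sym S] ss by blast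
  moreover have "s' \<in> Y" unfolding Y_def using SX[OF sym S'] ss unfolding S'_def by blast
  ultimately have XY: "X \<inter> Y \<noteq> {}" by blast
  have "s \<in> X" unfolding X_def using SX[OF sym S] ss by blast
  moreover have "s \<notin> Y"
  proof -
    have "s \<in> T" using ss ST by blast
    moreover have "s \<notin> S'" using ss v unfolding S'_def by blast
    ultimately show ?thesis unfolding Y_def by (rule notin_X[OF sym T S'T])
  qed
  moreover have "v \<in> Y" unfolding Y_def using SX[OF sym S'] unfolding S'_def by blast
  moreover have "v \<notin> X" unfolding X_def using notin_X[OF sym T _ v] ST by blast
  ultimately have "\<not> (X \<subseteq> Y \<or> Y \<subseteq> X)" by blast
  then show False using st Yp XY unfolding strong_partitive_def X_def by blast
qed

theorem theorem3p9:
  fixes V :: "'a set" and E :: "('a \<times> 'a) set" and Vs :: "'a set" and M :: "('a \<times> 'a) set"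
  assumes "undirected_graph V E"
    and "simplex V E Vs"
    and "M = multiplex E Vs"
  shows "maximal_multiplex V E M \<longleftrightarrow> strong_partitive V E (spanned M)"
proof -
  have sym: "sym E" and EV: "E \<subseteq> V \<times> V" using assms(1) unfolding undirected_graph_def by auto
  show ?thesis
  proof
    assume "maximal_multiplex V E M"
    then obtain T where T: "maximal_simplex V E T" "M = multiplex E T"
      unfolding maximal_multiplex_def by blast
    show "strong_partitive V E (spanned M)" using claim2[OF sym EV T(1)] T(2) by simp
  next
    assume st: "strong_partitive V E (spanned M)"
    show "maximal_multiplex V E M"
    proof (cases "maximal_simplex V E Vs")
      case True
      then show ?thesis unfolding maximal_multiplex_def using assms(3) by blast
    next
      case False
      then show ?thesis using claim3[OF sym EV assms(2) False] st assms(3) by simp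
    qed
  qed
qed


end
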